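(* Let $\beta\in(1/2,1)$, $r>0$, assume the tail condition (T) and the coupling below, and suppose \[ \max_{q\in(0,1]}\Big(\tfrac{1+q}{2}-\alpha(q,r)-\beta\Big)<0 . \] Fix $t_1\in(0,1/2)$ and let $t_0=n^{-1}$. Then for every $\epsilon>0$ there exists $n_0=n_0(\epsilon)$ such that for all $n\ge n_0$, \[ \sup_{t\in(t_0,t_1)}\sqrt n\,\big|\mathbb E\tilde F^{(1)}(t)-\mathbb E\tilde F^{(0)}(t)\big|\,w(t)\le\epsilon . \]
   Context: $\epsilon_n=n^{-\beta}$. For each $n$ and $i\le n$, $G_{n,i}$ is a probability distribution on $(0,1)$ with $G_{n,i}(t)\ge t$. Tail condition (T): $\alpha:[0,1]\times(0,\infty)\to[0,\infty)$ is continuous, nondecreasing in $q$, nonincreasing in $r$, and there is $\delta_n\to0$ with $|-\log\Pr(X<n^{-q})-\alpha(q,r)\log n|\le\delta_n\log n$ for all $n$, $i\le n$, $q\in(0,1]$, $X\sim G_{n,i}$. Coupling: $I\subset\{1,\dots,n\}$ random with each $i$ included independently with probability $\epsilon_n$; $Q^{(0)}_1,\dots,Q^{(0)}_n$ i.i.d. $\mathrm{Unif}(0,1)$ independent of $I$; for $i\in I$, $Q^{(1)}_i\sim G_{n,i}$ independently of everything else; for $i\notin I$, $Q^{(1)}_i=Q^{(0)}_i$. For $h\in\{0,1\}$, $\tilde F^{(h)}(t)=\frac1n\sum_{i\in I}\mathbf 1(Q^{(h)}_i\le t)$; $\mathbb E$ is unconditional expectation; $w(t)=1/\sqrt{t(1-t)}$.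 *)

theory Defs
  imports "HOL-Probability.Probability"
begin

definition eps_n :: "real \<Rightarrow> nat \<Rightarrow> real" where
  "eps_n \<beta> n = real n powr (- \<beta>)"

text \<open>Coordinate i is a triple (b_i, U_i, Y_i): b_i ~ Bernoulli(eps_n) is the indicator
  of i in I, U_i ~ Unif(0,1) is Q^(0)_i, and Y_i ~ G n i is the fresh draw used for
  Q^(1)_i when i in I; all coordinates are independent.\<close>
definition coupling ::
  "real \<Rightarrow> (nat \<Rightarrow> nat \<Rightarrow> real measure) \<Rightarrow> nat \<Rightarrow> (nat \<Rightarrow> bool \<times> real \<times> real) measure" where
  "coupling \<beta> G n =
     PiM {1..n} (\<lambda>i. measure_pmf (bernoulli_pmf (eps_n \<beta> n))
                        \<Otimes>\<^sub>M (uniform_measure lborel {0<..<1} \<Otimes>\<^sub>M G n i))"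

definition Iset :: "nat \<Rightarrow> (nat \<Rightarrow> bool \<times> real \<times> real) \<Rightarrow> nat set" where
  "Iset n \<omega> = {i \<in> {1..n}. fst (\<omega> i)}"

definition Qh :: "nat \<Rightarrow> (nat \<Rightarrow> bool \<times> real \<times> real) \<Rightarrow> nat \<Rightarrow> real" where
  "Qh h \<omega> i = (if h = 0 then fst (snd (\<omega> i))
                 else (if fst (\<omega> i) then snd (snd (\<omega> i)) else fst (snd (\<omega> i))))"

definition Ftilde :: "nat \<Rightarrow> nat \<Rightarrow> (nat \<Rightarrow> bool \<times> real \<times> real) \<Rightarrow> real \<Rightarrow> real" where
  "Ftilde n h \<omega> t = (1 / real n) * (\<Sum>i\<in>Iset n \<omega>. if Qh h \<omega> i \<le> t then 1 else 0)"

definition wgt :: "real \<Rightarrow> real" where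
  "wgt t = 1 / sqrt (t * (1 - t))"

end

theory Submission imports Defs begin


lemma measure_pair_Times_prob:
  assumes "prob_space N" "prob_space M" "A \<in> sets N" "B \<in> sets M"
  shows "measure (N \<Otimes>\<^sub>M M) (A \<times> B) = measure N A * measure M B"
proof -
  interpret M: prob_space M by fact
  interpret N: prob_space N by fact
  have "emeasure (N \<Otimes>\<^sub>M M) (A \<times> B) = emeasure N A * emeasure M B"
    using M.emeasure_pair_measure_Times assms by blast
  thus ?thesis unfolding measure_def by (simp add: enn2real_mult)
qed

lemma unif_measure_le:
  assumes "0 < t" "t < 1"
  shows "measure (uniform_measure lborel {0<..<(1::real)}) {..t} = t"
proof -
  have "measure (uniform_measure lborel {0<..<(1::real)}) {..t} = measure lborel ({0<..<1} \<inter> {..t}) / measure lborel {0<..<(1::real)}"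
    by (subst measure_uniform_measure) auto
  also have "{0<..<1} \<inter> {..t} = {0<..t}" using assms by auto
  finally show ?thesis using assms by simp
qed

lemma unif_prob: "prob_space (uniform_measure lborel {0<..<(1::real)})"
  by (rule prob_space_uniform_measure) auto




lemma coupling_component:
  fixes G :: "nat \<Rightarrow> nat \<Rightarrow> real measure" and f :: "bool \<times> real \<times> real \<Rightarrow> real"
  assumes G_prob: "\<And>n i. prob_space (G n i)"
    and i: "i \<in> {1..n}"
    and f: "f \<in> borel_measurable (measure_pmf (bernoulli_pmf (eps_n \<beta> n)) \<Otimes>\<^sub>M (uniform_measure lborel {0<..<1} \<Otimes>\<^sub>M G n i))"
  shows "(\<integral>\<omega>. f (\<omega> i) \<partial>coupling \<beta> G n) = (\<integral>x. f x \<partial>(measure_pmf (bernoulli_pmf (eps_n \<beta> n)) \<Otimes>\<^sub>M (uniform_measure lborel {0<..<1} \<Otimes>\<^sub>M G n i)))"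
proof -
  define M :: "nat \<Rightarrow> (bool \<times> real \<times> real) measure" where "M = (\<lambda>i. measure_pmf (bernoulli_pmf (eps_n \<beta> n)) \<Otimes>\<^sub>M (uniform_measure lborel {0<..<1} \<Otimes>\<^sub>M G n i))"
  have P: "prob_space (M i)" for i
    unfolding M_def by (intro prob_space_pair prob_space_measure_pmf G_prob prob_space_uniform_measure) auto
  interpret product_prob_space M "{1..n}"
    using P by (simp add: product_prob_space_def product_prob_space_axioms_def product_sigma_finite_def prob_space_imp_sigma_finite)
  have "(\<integral>\<omega>. f (\<omega> i) \<partial>coupling \<beta> G n) = (\<integral>\<omega>. f (\<omega> i) \<partial>PiM {1..n} M)"
    unfolding coupling_def M_def ..
  also have "\<dots> = integral\<^sup>L (distr (PiM {1..n} M) (M i) (\<lambda>\<omega>. \<omega> i)) f"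
    using f i by (subst integral_distr) (auto simp: M_def)
  also have "\<dots> = integral\<^sup>L (M i) f" using PiM_component[OF i] by simp
  finally show ?thesis unfolding M_def .
qed



lemma eps_bounds: assumes "1 \<le> n" "0 < \<beta>" shows "0 \<le> eps_n \<beta> n" "eps_n \<beta> n \<le> 1"
proof -
  show "0 \<le> eps_n \<beta> n" unfolding eps_n_def by simp
  have "1 \<le> real n powr \<beta>" using assms by (intro ge_one_powr_ge_zero) auto
  thus "eps_n \<beta> n \<le> 1" unfolding eps_n_def using assms by (simp add: powr_minus divide_le_eq_1 field_simps)
qed

lemma Ftilde_sum:
  "Ftilde n h \<omega> t = (1 / real n) * (\<Sum>i\<in>{1..n}. indicator (if h = 0 then {True} \<times> ({..t} \<times> UNIV) else {True} \<times> (UNIV \<times> {..t})) (\<omega> i))"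
proof -
  have "(\<Sum>i\<in>Iset n \<omega>. if Qh h \<omega> i \<le> t then 1 else (0::real)) = (\<Sum>i\<in>{1..n}. if fst (\<omega> i) then (if Qh h \<omega> i \<le> t then 1 else 0) else 0)"
    unfolding Iset_def by (rule sum.inter_filter) simp
  also have "\<dots> = (\<Sum>i\<in>{1..n}. indicator (if h = 0 then {True} \<times> ({..t} \<times> UNIV) else {True} \<times> (UNIV \<times> {..t})) (\<omega> i))"
    by (rule sum.cong) (auto simp: Qh_def indicator_def mem_Times_iff)
  finally show ?thesis unfolding Ftilde_def by simp
qed

lemma coupling_diff:
  fixes G :: "nat \<Rightarrow> nat \<Rightarrow> real measure"
  assumes G_prob: "\<And>n i. prob_space (G n i)"
    and G_sets: "\<And>n i. sets (G n i) = sets borel"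
    and n: "1 \<le> n" and beta: "0 < \<beta>" and t: "0 < t" "t < 1"
  shows "(\<integral>\<omega>. Ftilde n 1 \<omega> t \<partial>coupling \<beta> G n) - (\<integral>\<omega>. Ftilde n 0 \<omega> t \<partial>coupling \<beta> G n)
       = (1 / real n) * (\<Sum>i\<in>{1..n}. eps_n \<beta> n * (measure (G n i) {..t} - t))"
proof -
  define M :: "nat \<Rightarrow> (bool \<times> real \<times> real) measure" where "M = (\<lambda>i. measure_pmf (bernoulli_pmf (eps_n \<beta> n)) \<Otimes>\<^sub>M (uniform_measure lborel {0<..<1} \<Otimes>\<^sub>M G n i))"
  have P: "prob_space (M i)" for i
    unfolding M_def by (intro prob_space_pair prob_space_measure_pmf G_prob prob_space_uniform_measure) auto
  interpret product_prob_space M "{1..n}"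
    using P by (simp add: product_prob_space_def product_prob_space_axioms_def product_sigma_finite_def prob_space_imp_sigma_finite)
  have C: "coupling \<beta> G n = PiM {1..n} M" unfolding coupling_def M_def ..
  define S :: "nat \<Rightarrow> (bool \<times> real \<times> real) set" where
    "S h = (if h = 0 then {True} \<times> ({..t} \<times> UNIV) else {True} \<times> (UNIV \<times> {..t}))" for h
  have UNIVG: "UNIV \<in> sets (G n i)" for i using G_sets by simp
  have tG: "{..t} \<in> sets (G n i)" for i using G_sets by simp
  have Ssets: "S h \<in> sets (M i)" for h i
    unfolding S_def M_def using UNIVG tG
    by (auto intro!: pair_measureI simp: sets_uniform_measure)
  have meas: "(\<lambda>\<omega>. indicator (S h) (\<omega> i) :: real) \<in> borel_measurable (PiM {1..n} M)" if "i \<in> {1..n}" for h i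
    using Ssets that by (intro measurable_compose[OF measurable_component_singleton borel_measurable_indicator]) auto
  have intg: "integrable (PiM {1..n} M) (\<lambda>\<omega>. indicator (S h) (\<omega> i) :: real)" if "i \<in> {1..n}" for h i
    using meas[OF that] by (intro P.integrable_const_bound[where B=1]) auto
  have comp: "(\<integral>\<omega>. indicator (S h) (\<omega> i) \<partial>PiM {1..n} M) = measure (M i) (S h)" if "i \<in> {1..n}" for h i
  proof -
    have bi: "(indicator (S h) :: _ \<Rightarrow> real) \<in> borel_measurable (M i)" using Ssets by simp
    have "(\<integral>\<omega>. indicator (S h) (\<omega> i) \<partial>PiM {1..n} M) = integral\<^sup>L (distr (PiM {1..n} M) (M i) (\<lambda>\<omega>. \<omega> i)) (indicator (S h) :: _ \<Rightarrow> real)"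
      using integral_distr[OF measurable_component_singleton[of i "{1..n}" M, OF that] bi] by (rule sym)
    also have "\<dots> = integral\<^sup>L (M i) (indicator (S h))" using PiM_component[OF that] by simp
    also have "\<dots> = measure (M i) (S h)" using Ssets by (simp add: Int_absorb2 sets.sets_into_space)
    finally show ?thesis .
  qed
  have intF: "(\<integral>\<omega>. Ftilde n h \<omega> t \<partial>PiM {1..n} M) = (1 / real n) * (\<Sum>i\<in>{1..n}. measure (M i) (S h))" for h
  proof -
    have SI: "(\<integral>\<omega>. (\<Sum>i\<in>{1..n}. indicator (S h) (\<omega> i) :: real) \<partial>PiM {1..n} M) = (\<Sum>i\<in>{1..n}. (\<integral>\<omega>. indicator (S h) (\<omega> i) \<partial>PiM {1..n} M))"
      by (rule Bochner_Integration.integral_sum) (rule intg)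
    have "(\<integral>\<omega>. Ftilde n h \<omega> t \<partial>PiM {1..n} M) = (\<integral>\<omega>. (1 / real n) * (\<Sum>i\<in>{1..n}. indicator (S h) (\<omega> i)) \<partial>PiM {1..n} M)"
      unfolding Ftilde_sum S_def ..
    also have "\<dots> = (1 / real n) * (\<Sum>i\<in>{1..n}. (\<integral>\<omega>. indicator (S h) (\<omega> i) \<partial>PiM {1..n} M))"
      using SI by simp
    also have "\<dots> = (1 / real n) * (\<Sum>i\<in>{1..n}. measure (M i) (S h))"
      using comp by simp
    finally show ?thesis .
  qed
  have U: "prob_space (uniform_measure lborel {0<..<(1::real)})" by (rule unif_prob)
  have mU: "measure (uniform_measure lborel {0<..<(1::real)}) UNIV = 1"
    by (subst measure_uniform_measure) auto
  have mG: "measure (G n i) UNIV = 1" for i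
  proof -
    interpret G: prob_space "G n i" by (rule G_prob)
    have "space (G n i) = UNIV" using sets_eq_imp_space_eq[OF G_sets] by simp
    thus ?thesis using G.prob_space by simp
  qed
  have p: "measure (measure_pmf (bernoulli_pmf (eps_n \<beta> n))) {True} = eps_n \<beta> n"
    using eps_bounds[OF n beta] by (simp add: measure_pmf_single)
  have m1: "measure (M i) (S 1) = eps_n \<beta> n * measure (G n i) {..t}" for i
    unfolding M_def S_def
    using measure_pair_Times_prob[OF prob_space_measure_pmf prob_space_pair[OF U G_prob], where A="{True}" and B="UNIV \<times> {..t}"]
      measure_pair_Times_prob[OF U G_prob, where A=UNIV and B="{..t}"] UNIVG tG mU p
    by (simp add: pair_measureI sets_uniform_measure)
  have m0: "measure (M i) (S 0) = eps_n \<beta> n * t" for i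
    unfolding M_def S_def
    using measure_pair_Times_prob[OF prob_space_measure_pmf prob_space_pair[OF U G_prob], where A="{True}" and B="{..t} \<times> UNIV"]
      measure_pair_Times_prob[OF U G_prob, where A="{..t}" and B=UNIV] UNIVG tG mG p unif_measure_le[OF t]
    by (simp add: pair_measureI sets_uniform_measure)
  show ?thesis unfolding C intF m1 m0
    by (simp add: sum_subtractf right_diff_distrib)
qed



lemma wgt_bound: assumes "0 < t" "t < 1/2" shows "wgt t \<le> sqrt 2 / sqrt t"
proof -
  have "t * t \<le> t * (1/2)" using assms by (intro mult_left_mono) auto
  hence "t / 2 \<le> t * (1 - t)" by (simp add: algebra_simps)
  hence "sqrt (t/2) \<le> sqrt (t * (1 - t))" by (rule real_sqrt_le_mono)
  moreover have "sqrt (t/2) = sqrt t / sqrt 2" by (simp add: real_sqrt_divide)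
  moreover have "sqrt t > 0" using assms by simp
  ultimately have "sqrt t / sqrt 2 \<le> sqrt (t * (1 - t))" by simp
  hence "1 / sqrt (t * (1 - t)) \<le> 1 / (sqrt t / sqrt 2)"
    using \<open>sqrt t > 0\<close> assms by (intro divide_left_mono) (auto intro!: mult_pos_pos)
  thus ?thesis unfolding wgt_def by simp
qed

lemma core:
  fixes x t g a q \<beta> :: real
  assumes x: "1 < x" and t: "0 < t" "t < 1/2" and g: "0 \<le> g" "g \<le> x powr (-a)"
    and tq: "t = x powr (-q)"
  shows "sqrt x * x powr (-\<beta>) * g * wgt t \<le> sqrt 2 * x powr (1/2 - \<beta> - a + q/2)"
proof -
  have w: "wgt t \<le> sqrt 2 * x powr (q/2)"
  proof -
    have "sqrt t = x powr (-q/2)" using tq x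
      by (simp add: powr_half_sqrt[symmetric] powr_powr)
    hence "1 / sqrt t = x powr (q/2)" by (simp add: powr_minus_divide[symmetric])
    moreover have "sqrt 2 / sqrt t = sqrt 2 * (1 / sqrt t)" by simp
    ultimately show ?thesis using wgt_bound[OF t] by simp
  qed
  have sx: "sqrt x = x powr (1/2)" using x by (simp add: powr_half_sqrt)
  have "sqrt x * x powr (-\<beta>) * g * wgt t \<le> sqrt x * x powr (-\<beta>) * x powr (-a) * (sqrt 2 * x powr (q/2))"
    using g w t x by (intro mult_mono) (auto simp: wgt_def)
  also have "\<dots> = sqrt 2 * (x powr (1/2) * x powr (-\<beta>) * x powr (-a) * x powr (q/2))" using sx by simp
  also have "x powr (1/2) * x powr (-\<beta>) * x powr (-a) * x powr (q/2) = x powr (1/2 - \<beta> - a + q/2)"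
    by (simp add: powr_add[symmetric])
  finally show ?thesis .
qed

lemma q_repr:
  fixes x t :: real assumes "1 < x" "0 < t"
  shows "t = x powr (-(- ln t / ln x))"
  using assms by (simp add: powr_def)



theorem lemma12:
  fixes \<beta> r t\<^sub>1 :: real
    and \<alpha> :: "real \<Rightarrow> real \<Rightarrow> real"
    and G :: "nat \<Rightarrow> nat \<Rightarrow> real measure"
    and \<delta> :: "nat \<Rightarrow> real"
  assumes beta: "1/2 < \<beta>" "\<beta> < 1"
    and r_pos: "0 < r"
    and G_prob: "\<And>n i. prob_space (G n i)"
    and G_sets: "\<And>n i. sets (G n i) = sets borel"
    and G_supp: "\<And>n i. measure (G n i) {0<..<1} = 1"
    and G_dom: "\<And>n i t. t \<in> {0<..<1} \<Longrightarrow> measure (G n i) {..t} \<ge> t"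
    and alpha_cont: "continuous_on ({0..1} \<times> {0<..}) (\<lambda>(q, s). \<alpha> q s)"
    and alpha_nonneg: "\<And>q s. q \<in> {0..1} \<Longrightarrow> 0 < s \<Longrightarrow> 0 \<le> \<alpha> q s"
    and alpha_mono_q: "\<And>q q' s. 0 \<le> q \<Longrightarrow> q \<le> q' \<Longrightarrow> q' \<le> 1 \<Longrightarrow> 0 < s \<Longrightarrow> \<alpha> q s \<le> \<alpha> q' s"
    and alpha_antimono_r: "\<And>q s s'. q \<in> {0..1} \<Longrightarrow> 0 < s \<Longrightarrow> s \<le> s' \<Longrightarrow> \<alpha> q s' \<le> \<alpha> q s"
    and delta_lim: "\<delta> \<longlonglongrightarrow> 0"
    and tail: "\<And>n i q. 1 \<le> i \<Longrightarrow> i \<le> n \<Longrightarrow> q \<in> {0<..1} \<Longrightarrow>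
               measure (G n i) {..< real n powr (- q)} > 0 \<and>
               \<bar>- ln (measure (G n i) {..< real n powr (- q)}) - \<alpha> q r * ln (real n)\<bar>
                 \<le> \<delta> n * ln (real n)"
    and maxcond: "(SUP q\<in>{0<..1}. (1 + q) / 2 - \<alpha> q r - \<beta>) < 0"
    and t1: "0 < t\<^sub>1" "t\<^sub>1 < 1/2"
  shows "\<forall>\<epsilon>>0. \<exists>n\<^sub>0. \<forall>n\<ge>n\<^sub>0. \<forall>t\<in>{1 / real n<..<t\<^sub>1}.
           sqrt (real n) *
           \<bar>(\<integral>\<omega>. Ftilde n 1 \<omega> t \<partial>coupling \<beta> G n) - (\<integral>\<omega>. Ftilde n 0 \<omega> t \<partial>coupling \<beta> G n)\<bar>
           * wgt t \<le> \<epsilon>"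
proof (intro allI impI)
  fix \<epsilon> :: real assume epos: "\<epsilon> > 0"
  define s where "s = (SUP q\<in>{0<..1}. (1 + q) / 2 - \<alpha> q r - \<beta>)"
  have bdd: "bdd_above ((\<lambda>q. (1 + q) / 2 - \<alpha> q r - \<beta>) ` {0<..1})"
  proof (rule bdd_aboveI2[where M="1 - \<beta>"])
    fix q :: real assume "q \<in> {0<..1}"
    hence "0 \<le> \<alpha> q r" "q \<le> 1" using alpha_nonneg[of q r] r_pos by auto
    hence h: "(1 + q) / 2 \<le> 1" "0 \<le> \<alpha> q r" by auto
    show "(1 + q) / 2 - \<alpha> q r - \<beta> \<le> 1 - \<beta>" using h by linarith
  qed
  define c where "c = - s"
  have cpos: "c > 0" using maxcond by (simp add: c_def s_def)
  have key: "(1 + q)/2 - \<alpha> q r - \<beta> \<le> -c" if "q \<in> {0<..1}" for q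
    using cSUP_upper[OF that bdd] by (simp add: c_def s_def)
  have contA: "continuous_on {0..1} (\<lambda>q. \<alpha> q r)"
  proof -
    have "continuous_on {0..1} (\<lambda>q. (\<lambda>(q, s). \<alpha> q s) (q, r))"
      by (rule continuous_on_compose2[OF alpha_cont]) (use r_pos in \<open>auto intro!: continuous_intros\<close>)
    thus ?thesis by simp
  qed
  have ucont: "uniformly_continuous_on {0..1} (\<lambda>q. \<alpha> q r)"
    by (rule compact_uniformly_continuous[OF contA compact_Icc])
  have "\<exists>d>0. \<forall>x\<in>{0..1}. \<forall>x'\<in>{0..1}. dist x' x < d \<longrightarrow> dist (\<alpha> x' r) (\<alpha> x r) < c/4"
    using ucont[unfolded uniformly_continuous_on_def, rule_format, of "c/4"] cpos by simp
  then obtain \<eta>0 where eta0: "\<eta>0 > 0"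
    "\<And>x x'. x\<in>{0..1} \<Longrightarrow> x'\<in>{0..1} \<Longrightarrow> dist x' x < \<eta>0 \<Longrightarrow> dist (\<alpha> x' r) (\<alpha> x r) < c/4"
    by blast
  define \<eta> where "\<eta> = min (\<eta>0/2) ((2*\<beta> - 1)/2)"
  have etapos: "\<eta> > 0" "\<eta> < \<eta>0" "\<eta> \<le> (2*\<beta> - 1)/2"
    using eta0(1) beta unfolding \<eta>_def by (auto simp: min_def)
  define e1 where "e1 = \<beta> - 1/2 - \<eta>/2"
  have e1pos: "e1 > 0" using etapos beta unfolding e1_def by auto
  have lim0: "((\<lambda>n. sqrt 2 * real n powr (- e)) \<longlonglongrightarrow> 0)" if "e > 0" for e
  proof -
    have "((\<lambda>n. real n powr (- e)) \<longlonglongrightarrow> 0)"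
      using that by (intro tendsto_neg_powr filterlim_real_sequentially) auto
    from tendsto_mult[OF tendsto_const this, of "sqrt 2"] show ?thesis by simp
  qed
  have ev1: "eventually (\<lambda>n. \<delta> n < c/4) sequentially"
    using order_tendstoD(2)[OF delta_lim, of "c/4"] cpos by simp
  have ev2: "eventually (\<lambda>n. sqrt 2 * real n powr (- e1) < \<epsilon>) sequentially"
    using order_tendstoD(2)[OF lim0[OF e1pos] epos] .
  have ev3: "eventually (\<lambda>n. sqrt 2 * real n powr (- (c/2)) < \<epsilon>) sequentially"
    using order_tendstoD(2)[OF lim0 epos] cpos by simp
  have ev4: "eventually (\<lambda>n. 2 \<le> n) sequentially" by (rule eventually_ge_at_top)
  obtain N where N: "\<And>n. n \<ge> N \<Longrightarrow> \<delta> n < c/4 \<and> sqrt 2 * real n powr (- e1) < \<epsilon> \<and>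
      sqrt 2 * real n powr (- (c/2)) < \<epsilon> \<and> 2 \<le> n"
    using eventually_conj[OF ev1 eventually_conj[OF ev2 eventually_conj[OF ev3 ev4]]]
    unfolding eventually_sequentially by blast
  show "\<exists>n\<^sub>0. \<forall>n\<ge>n\<^sub>0. \<forall>t\<in>{1 / real n<..<t\<^sub>1}.
           sqrt (real n) *
           \<bar>(\<integral>\<omega>. Ftilde n 1 \<omega> t \<partial>coupling \<beta> G n) - (\<integral>\<omega>. Ftilde n 0 \<omega> t \<partial>coupling \<beta> G n)\<bar>
           * wgt t \<le> \<epsilon>"
  proof (intro exI allI impI ballI)
    fix n :: nat and t :: real
    assume nN: "n \<ge> N" and tI: "t \<in> {1 / real n<..<t\<^sub>1}"
    note Nn = N[OF nN]
    define x where "x = real n"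
    have x1: "1 < x" using Nn unfolding x_def by simp
    have tpos: "0 < t" using tI x1 unfolding x_def by (auto intro: less_trans[rotated])
    have thalf: "t < 1/2" using tI t1 by auto
    define L where "L = ln x"
    have Lpos: "L > 0" using x1 unfolding L_def by simp
    define q where "q = - ln t / L"
    have tq: "t = x powr (-q)" unfolding q_def L_def by (rule q_repr[OF x1 tpos])
    have lnt: "ln t < 0" using tpos thalf by simp
    have qpos: "q > 0" using lnt Lpos unfolding q_def by (simp add: divide_neg_pos)
    have qle1: "q < 1"
    proof -
      have "1 / x < t" using tI unfolding x_def by simp
      hence "ln (1 / x) < ln t" using x1 tpos by simp
      hence "- ln t < L" using x1 unfolding L_def by (simp add: ln_div)
      thus ?thesis unfolding q_def using Lpos by (simp add: field_simps)
    qed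
    have pw: "sqrt (real n) * eps_n \<beta> n * measure (G n i) {..t} * wgt t \<le> \<epsilon>" if i: "i \<in> {1..n}" for i
    proof -
      interpret Gp: prob_space "G n i" by (rule G_prob)
      define g where "g = measure (G n i) {..t}"
      have g0: "0 \<le> g" unfolding g_def by simp
      have "sqrt x * x powr (-\<beta>) * g * wgt t \<le> \<epsilon>"
      proof (cases "q \<le> \<eta>")
        case True
        have "g \<le> x powr (- 0)" unfolding g_def using x1 by simp
        from core[OF x1 tpos thalf g0 this tq, of \<beta>]
        have "sqrt x * x powr (-\<beta>) * g * wgt t \<le> sqrt 2 * x powr (1/2 - \<beta> - 0 + q/2)" .
        also have "\<dots> \<le> sqrt 2 * x powr (- e1)"
          using True x1 unfolding e1_def by (intro mult_left_mono powr_mono) auto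
        finally show ?thesis using Nn unfolding x_def by simp
      next
        case False
        define q' where "q' = q - \<eta>"
        have q'I: "q' \<in> {0<..1}" using False qle1 etapos unfolding q'_def by auto
        from tail[of i n q', OF _ _ q'I] i
        have P: "measure (G n i) {..< x powr (- q')} > 0"
          "\<bar>- ln (measure (G n i) {..< x powr (- q')}) - \<alpha> q' r * L\<bar> \<le> \<delta> n * L"
          unfolding x_def L_def by auto
        define Pm where "Pm = measure (G n i) {..< x powr (- q')}"
        have "ln Pm \<le> (\<delta> n - \<alpha> q' r) * L" using P(2) unfolding Pm_def by (simp add: algebra_simps)
        hence "Pm \<le> exp ((\<delta> n - \<alpha> q' r) * L)" using P(1) unfolding Pm_def by (metis exp_le_cancel_iff exp_ln)
        also have "\<dots> = x powr (- (\<alpha> q' r - \<delta> n))" using x1 unfolding L_def powr_def by simp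
        finally have Pmb: "Pm \<le> x powr (- (\<alpha> q' r - \<delta> n))" .
        have "t < x powr (- q')" unfolding tq using x1 etapos unfolding q'_def by simp
        hence "g \<le> Pm" unfolding g_def Pm_def using G_sets
          by (intro Gp.finite_measure_mono) auto
        with Pmb have gb: "g \<le> x powr (- (\<alpha> q' r - \<delta> n))" by simp
        from core[OF x1 tpos thalf g0 gb tq, of \<beta>]
        have "sqrt x * x powr (-\<beta>) * g * wgt t \<le> sqrt 2 * x powr (1/2 - \<beta> - (\<alpha> q' r - \<delta> n) + q/2)" .
        also have "\<dots> \<le> sqrt 2 * x powr (- (c/2))"
        proof -
          have "dist (\<alpha> q' r) (\<alpha> q r) < c/4"
            using eta0(2)[of q q'] q'I qpos qle1 etapos unfolding q'_def by (auto simp: dist_real_def)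
          hence "\<alpha> q r - c/4 < \<alpha> q' r" unfolding dist_real_def by arith
          moreover have "(1 + q)/2 - \<alpha> q r - \<beta> \<le> -c" using key[of q] qpos qle1 by auto
          ultimately have "1/2 - \<beta> - (\<alpha> q' r - \<delta> n) + q/2 \<le> - (c/2)" using Nn[THEN conjunct1] add_divide_distrib[of 1 q 2] by linarith
          thus ?thesis using x1 by (intro mult_left_mono powr_mono) auto
        qed
        finally show ?thesis using Nn unfolding x_def by simp
      qed
      thus ?thesis unfolding g_def x_def eps_n_def by (simp add: powr_half_sqrt)
    qed
    have n1: "1 \<le> n" using Nn by simp
    have t01: "0 < t" "t < 1" using tpos thalf by auto
    have diff: "(\<integral>\<omega>. Ftilde n 1 \<omega> t \<partial>coupling \<beta> G n) - (\<integral>\<omega>. Ftilde n 0 \<omega> t \<partial>coupling \<beta> G n)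
       = (1 / real n) * (\<Sum>i\<in>{1..n}. eps_n \<beta> n * (measure (G n i) {..t} - t))"
      by (rule coupling_diff[OF G_prob G_sets n1 _ t01]) (use beta in auto)
    have nonneg: "0 \<le> eps_n \<beta> n * (measure (G n i) {..t} - t)" for i
      using G_dom[of t n i] t01 by (simp add: eps_n_def)
    have wpos: "0 \<le> wgt t" unfolding wgt_def using t01 by simp
    have termb: "sqrt (real n) * (eps_n \<beta> n * (measure (G n i) {..t} - t)) * wgt t \<le> \<epsilon>" if "i \<in> {1..n}" for i
    proof -
      have "sqrt (real n) * (eps_n \<beta> n * (measure (G n i) {..t} - t)) * wgt t
          \<le> sqrt (real n) * eps_n \<beta> n * measure (G n i) {..t} * wgt t"
      proof -
        have "0 \<le> sqrt (real n) * eps_n \<beta> n * t * wgt t" using wpos t01 by (simp add: eps_n_def)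
        thus ?thesis by (simp add: algebra_simps)
      qed
      thus ?thesis using pw[OF that] by linarith
    qed
    have "sqrt (real n) * \<bar>(\<integral>\<omega>. Ftilde n 1 \<omega> t \<partial>coupling \<beta> G n) - (\<integral>\<omega>. Ftilde n 0 \<omega> t \<partial>coupling \<beta> G n)\<bar> * wgt t
        = (1 / real n) * (\<Sum>i\<in>{1..n}. sqrt (real n) * (eps_n \<beta> n * (measure (G n i) {..t} - t)) * wgt t)"
    proof -
      have ab: "\<bar>(1 / real n) * (\<Sum>i\<in>{1..n}. eps_n \<beta> n * (measure (G n i) {..t} - t))\<bar>
          = (1 / real n) * (\<Sum>i\<in>{1..n}. eps_n \<beta> n * (measure (G n i) {..t} - t))"
        by (rule abs_of_nonneg) (simp add: sum_nonneg nonneg)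
      show ?thesis unfolding diff ab
        by (simp add: sum_distrib_left sum_distrib_right mult_ac)
    qed
    also have "\<dots> \<le> (1 / real n) * (real (card {1..n}) * \<epsilon>)"
      using termb by (intro mult_left_mono sum_bounded_above) auto
    also have "\<dots> = \<epsilon>" using n1 by simp
    finally show "sqrt (real n) * \<bar>(\<integral>\<omega>. Ftilde n 1 \<omega> t \<partial>coupling \<beta> G n) - (\<integral>\<omega>. Ftilde n 0 \<omega> t \<partial>coupling \<beta> G n)\<bar> * wgt t \<le> \<epsilon>" .
  qed
qed


end
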